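(* Let $(U,\mathcal{I})$ be a matroid, $f:2^U\to\mathbb{R}_{\ge0}$ a non-negative, monotonically non-decreasing submodular function, and $p\in(0,1)$. The triple of sets $(H,M,N)$ produced by $\mathrm{SIMULATE}$ has the same joint distribution as the triple $(H,M,N)$ produced by $\mathrm{ONLINE}$ (with the same $p$) when the elements of $U$ arrive in a uniformly random order.
   Context: Notation: $n=|U|$; $f_T(e)=f(T\cup\{e\})-f(T)$. All argmax choices below break ties by a fixed rule. $\mathrm{GREEDY}(H)$ for $H\subseteq U$: start with $T=\emptyset$; while some $e\in H\setminus T$ has $T\cup\{e\}\in\mathcal{I}$, add such an $e$ maximizing $f_T(e)$; return $T$. $\mathrm{ONLINE}$: draw $m\sim\mathrm{Binom}(n,p)$; let $H$ be the set of the first $m$ arriving elements (all rejected); $M=\mathrm{GREEDY}(H)$; $N=\emptyset$; for each subsequent arriving $e$, if $\mathrm{GREEDY}(H\cup\{e\})\neq\mathrm{GREEDY}(H)$ then add $e$ to $N$ (and accept it if it keeps the accepted set independent). $\mathrm{SIMULATE}$: each element of $U$ is independently put into $H$ with probability $p$. Start with $M=N=\emptyset$. While there exists $e\in U\setminus(M\cup N)$ with $M\cup\{e\}\in\mathcal{I}$, take such an $e$ maximizing $f_M(e)$; if $e\in H$ add it to $M$, otherwise add it to $N$. *)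

theory Defs
  imports "HOL-Probability.Probability" "HOL-Combinatorics.Multiset_Permutations"
begin

definition matroid :: "'a set \<Rightarrow> ('a set \<Rightarrow> bool) \<Rightarrow> bool" where
  "matroid U indep \<longleftrightarrow>
     finite U \<and>
     (\<forall>X. indep X \<longrightarrow> X \<subseteq> U) \<and>
     indep {} \<and>
     (\<forall>X Y. indep X \<and> Y \<subseteq> X \<longrightarrow> indep Y) \<and>
     (\<forall>X Y. indep X \<and> indep Y \<and> card X < card Y \<longrightarrow>
        (\<exists>e \<in> Y - X. indep (insert e X)))"

definition nonneg_on :: "'a set \<Rightarrow> ('a set \<Rightarrow> real) \<Rightarrow> bool" where
  "nonneg_on U f \<longleftrightarrow> (\<forall>X \<subseteq> U. 0 \<le> f X)"

definition monotone_set_fun :: "'a set \<Rightarrow> ('a set \<Rightarrow> real) \<Rightarrow> bool" where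
  "monotone_set_fun U f \<longleftrightarrow> (\<forall>X Y. X \<subseteq> Y \<and> Y \<subseteq> U \<longrightarrow> f X \<le> f Y)"

definition submodular :: "'a set \<Rightarrow> ('a set \<Rightarrow> real) \<Rightarrow> bool" where
  "submodular U f \<longleftrightarrow>
     (\<forall>X Y. X \<subseteq> U \<and> Y \<subseteq> U \<longrightarrow> f (X \<union> Y) + f (X \<inter> Y) \<le> f X + f Y)"

definition marg :: "('a set \<Rightarrow> real) \<Rightarrow> 'a set \<Rightarrow> 'a \<Rightarrow> real" where
  "marg f T e = f (insert e T) - f T"

definition best :: "('a set \<Rightarrow> real) \<Rightarrow> ('a \<Rightarrow> nat) \<Rightarrow> 'a set \<Rightarrow> 'a set \<Rightarrow> 'a" where
  "best f rk T C = (THE e. e \<in> C \<and> (\<forall>e' \<in> C. marg f T e' < marg f T e \<or>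
                              (marg f T e' = marg f T e \<and> rk e \<le> rk e')))"

definition greedy_step ::
  "('a set \<Rightarrow> bool) \<Rightarrow> ('a set \<Rightarrow> real) \<Rightarrow> ('a \<Rightarrow> nat) \<Rightarrow> 'a set \<Rightarrow> 'a set \<Rightarrow> 'a set" where
  "greedy_step indep f rk H T =
     (let C = {e \<in> H - T. indep (insert e T)} in
      if C = {} then T else insert (best f rk T C) T)"

text \<open>Each non-final step adds a new element of \<open>H\<close>, so \<open>card H\<close> iterations
  reach the termination point of the while loop (for finite \<open>H\<close>).\<close>
definition greedy ::
  "('a set \<Rightarrow> bool) \<Rightarrow> ('a set \<Rightarrow> real) \<Rightarrow> ('a \<Rightarrow> nat) \<Rightarrow> 'a set \<Rightarrow> 'a set" where
  "greedy indep f rk H = (greedy_step indep f rk H ^^ card H) {}"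

definition online ::
  "'a set \<Rightarrow> ('a set \<Rightarrow> bool) \<Rightarrow> ('a set \<Rightarrow> real) \<Rightarrow> ('a \<Rightarrow> nat) \<Rightarrow> real
     \<Rightarrow> ('a set \<times> 'a set \<times> 'a set) pmf" where
  "online U indep f rk p =
     bind_pmf (pmf_of_set (permutations_of_set U)) (\<lambda>xs.
     bind_pmf (binomial_pmf (card U) p) (\<lambda>m.
       let H = set (take m xs) in
       return_pmf (H, greedy indep f rk H,
                   {e \<in> set (drop m xs). greedy indep f rk (insert e H) \<noteq> greedy indep f rk H})))"

definition sim_step ::
  "'a set \<Rightarrow> ('a set \<Rightarrow> bool) \<Rightarrow> ('a set \<Rightarrow> real) \<Rightarrow> ('a \<Rightarrow> nat) \<Rightarrow> 'a set
     \<Rightarrow> 'a set \<times> 'a set \<Rightarrow> 'a set \<times> 'a set" where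
  "sim_step U indep f rk H MN =
     (let M = fst MN; N = snd MN;
          C = {e \<in> U - (M \<union> N). indep (insert e M)} in
      if C = {} then MN
      else (let e = best f rk M C in
            if e \<in> H then (insert e M, N) else (M, insert e N)))"

text \<open>Each non-final step adds a new element of \<open>U\<close> to \<open>M \<union> N\<close>, so \<open>card U\<close>
  iterations reach the termination point of the while loop.\<close>
definition sim_run ::
  "'a set \<Rightarrow> ('a set \<Rightarrow> bool) \<Rightarrow> ('a set \<Rightarrow> real) \<Rightarrow> ('a \<Rightarrow> nat) \<Rightarrow> 'a set
     \<Rightarrow> 'a set \<times> 'a set" where
  "sim_run U indep f rk H = (sim_step U indep f rk H ^^ card U) ({}, {})"

definition simulate ::
  "'a set \<Rightarrow> ('a set \<Rightarrow> bool) \<Rightarrow> ('a set \<Rightarrow> real) \<Rightarrow> ('a \<Rightarrow> nat) \<Rightarrow> real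
     \<Rightarrow> ('a set \<times> 'a set \<times> 'a set) pmf" where
  "simulate U indep f rk p =
     bind_pmf (Pi_pmf U False (\<lambda>_. bernoulli_pmf p)) (\<lambda>b.
       let H = {e \<in> U. b e}; MN = sim_run U indep f rk H in
       return_pmf (H, fst MN, snd MN))"

end

theory Submission
  imports Defs
begin


definition beats :: "('a set \<Rightarrow> real) \<Rightarrow> ('a \<Rightarrow> nat) \<Rightarrow> 'a set \<Rightarrow> 'a \<Rightarrow> 'a \<Rightarrow> bool" where
  "beats f rk T e h \<longleftrightarrow> marg f T h < marg f T e \<or> (marg f T h = marg f T e \<and> rk e < rk h)"

lemma beats_trans: "beats f rk T a b \<Longrightarrow> beats f rk T b c \<Longrightarrow> beats f rk T a c"
  unfolding beats_def by auto

lemma beats_asym: "beats f rk T a b \<Longrightarrow> \<not> beats f rk T b a"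
  unfolding beats_def by auto

lemma beats_total: "inj_on rk U \<Longrightarrow> a \<in> U \<Longrightarrow> b \<in> U \<Longrightarrow> a \<noteq> b \<Longrightarrow> beats f rk T a b \<or> beats f rk T b a"
  unfolding beats_def by (metis inj_on_def linorder_neqE_linordered_idom nat_neq_iff)

lemma best_eq:
  assumes "inj_on rk U" "C \<subseteq> U" "e \<in> C" "\<forall>e'\<in>C. e' \<noteq> e \<longrightarrow> beats f rk T e e'"
  shows "best f rk T C = e"
  unfolding best_def
proof (rule the_equality)
  show "e \<in> C \<and> (\<forall>e'\<in>C. marg f T e' < marg f T e \<or> marg f T e' = marg f T e \<and> rk e \<le> rk e')"
    using assms(3,4) unfolding beats_def by force
next
  fix x assume x: "x \<in> C \<and> (\<forall>e'\<in>C. marg f T e' < marg f T x \<or> marg f T e' = marg f T x \<and> rk x \<le> rk e')"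
  show "x = e"
  proof (rule ccontr)
    assume "x \<noteq> e"
    then have "beats f rk T e x" using assms(4) x by auto
    moreover have "marg f T e < marg f T x \<or> marg f T e = marg f T x \<and> rk x \<le> rk e"
      using x assms(3) by auto
    ultimately show False unfolding beats_def by auto
  qed
qed

lemma best_ex:
  assumes "finite C" "C \<noteq> {}" "C \<subseteq> U" "inj_on rk U"
  shows "\<exists>e\<in>C. \<forall>e'\<in>C. e' \<noteq> e \<longrightarrow> beats f rk T e e'"
  using assms
proof (induction C rule: finite_ne_induct)
  case (singleton x) then show ?case by auto
next
  case (insert x F)
  then obtain e where e: "e \<in> F" "\<forall>e'\<in>F. e' \<noteq> e \<longrightarrow> beats f rk T e e'" by auto
  have "x \<noteq> e" using insert e by auto
  then have "beats f rk T x e \<or> beats f rk T e x"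
    using beats_total[of rk U x e f T] insert e by auto
  then show ?case
  proof
    assume "beats f rk T x e"
    then show ?thesis using e beats_trans by (metis insert_iff)
  next
    assume "beats f rk T e x"
    then show ?thesis using e by auto
  qed
qed

lemma best_spec:
  assumes "finite C" "C \<noteq> {}" "C \<subseteq> U" "inj_on rk U"
  shows "best f rk T C \<in> C \<and> (\<forall>e'\<in>C. e' \<noteq> best f rk T C \<longrightarrow> beats f rk T (best f rk T C) e')"
proof -
  obtain e where "e\<in>C" "\<forall>e'\<in>C. e' \<noteq> e \<longrightarrow> beats f rk T e e'" using best_ex[OF assms] by blast
  moreover then have "best f rk T C = e" using best_eq[OF assms(4,3)] by blast
  ultimately show ?thesis by simp
qed

lemma funpow_fix: "s y = y \<Longrightarrow> (s ^^ k) y = y"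
  by (induction k) auto

lemma funpow_fix_after:
  assumes "s ((s ^^ j) x) = (s ^^ j) x" "j \<le> k"
  shows "(s ^^ k) x = (s ^^ j) x"
proof -
  obtain d where "k = d + j" using assms(2) le_iff_add by (metis add.commute)
  then show ?thesis using funpow_fix[of s "(s ^^ j) x" d, OF assms(1)] by (simp add: funpow_add)
qed

lemma iter_fix:
  fixes \<mu> :: "'b \<Rightarrow> nat"
  assumes "\<And>x. P x \<Longrightarrow> P (s x)" "P x0"
    "\<And>x. P x \<Longrightarrow> s x \<noteq> x \<Longrightarrow> \<mu> x < \<mu> (s x)" "\<And>x. P x \<Longrightarrow> \<mu> x \<le> n"
  shows "s ((s ^^ n) x0) = (s ^^ n) x0"
proof -
  have P: "P ((s ^^ k) x0)" for k by (induction k) (auto simp: assms)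
  have c: "s ((s ^^ k) x0) = (s ^^ k) x0 \<or> k \<le> \<mu> ((s ^^ k) x0)" for k
  proof (induction k)
    case 0 then show ?case by simp
  next
    case (Suc k)
    show ?case
    proof (cases "s ((s ^^ k) x0) = (s ^^ k) x0")
      case True then show ?thesis by simp
    next
      case False
      then have "k \<le> \<mu> ((s ^^ k) x0)" using Suc by auto
      moreover have "\<mu> ((s ^^ k) x0) < \<mu> (s ((s ^^ k) x0))" using assms(3)[OF P False] .
      ultimately show ?thesis by simp
    qed
  qed
  show ?thesis
  proof (rule ccontr)
    assume a: "s ((s ^^ n) x0) \<noteq> (s ^^ n) x0"
    then have "n \<le> \<mu> ((s ^^ n) x0)" using c by auto
    moreover have "\<mu> ((s ^^ n) x0) < \<mu> (s ((s ^^ n) x0))" using assms(3)[OF P a] .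
    moreover have "\<mu> (s ((s ^^ n) x0)) \<le> n" using assms(4) assms(1)[OF P] by blast
    ultimately show False by simp
  qed
qed

definition cand :: "('a set \<Rightarrow> bool) \<Rightarrow> 'a set \<Rightarrow> 'a set \<Rightarrow> 'a set" where
  "cand indep T S = {e \<in> S - T. indep (insert e T)}"

definition gs where "gs indep f rk H k = (greedy_step indep f rk H ^^ k) {}"

definition DD where
  "DD U indep f rk H T = {e \<in> U - H. e \<notin> T \<and> indep (insert e T) \<and> (\<forall>h \<in> cand indep T H. beats f rk T e h)}"

context
  fixes U :: "'a set" and indep :: "'a set \<Rightarrow> bool" and f :: "'a set \<Rightarrow> real" and rk :: "'a \<Rightarrow> nat"
  assumes finU: "finite U" and inj: "inj_on rk U"
begin

lemma step_empty: "cand indep T H = {} \<Longrightarrow> greedy_step indep f rk H T = T"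
  unfolding greedy_step_def Let_def by (fold cand_def) simp

lemma step_ne: "cand indep T H \<noteq> {} \<Longrightarrow> greedy_step indep f rk H T = insert (best f rk T (cand indep T H)) T"
  unfolding greedy_step_def Let_def by (fold cand_def) simp

lemma best_cand:
  assumes "H \<subseteq> U" "cand indep T H \<noteq> {}"
  shows "best f rk T (cand indep T H) \<in> cand indep T H \<and>
    (\<forall>e'\<in>cand indep T H. e' \<noteq> best f rk T (cand indep T H) \<longrightarrow> beats f rk T (best f rk T (cand indep T H)) e')"
proof (rule best_spec[OF _ assms(2) _ inj])
  show "cand indep T H \<subseteq> U" using assms(1) unfolding cand_def by auto
  then show "finite (cand indep T H)" using finU by (rule finite_subset)
qed

lemma step_sub:
  assumes "H \<subseteq> U" "T \<subseteq> H"
  shows "T \<subseteq> greedy_step indep f rk H T \<and> greedy_step indep f rk H T \<subseteq> H"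
proof (cases "cand indep T H = {}")
  case True then show ?thesis using step_empty assms by simp
next
  case False
  have "best f rk T (cand indep T H) \<in> cand indep T H" using best_cand[OF assms(1) False] by blast
  then have "best f rk T (cand indep T H) \<in> H" unfolding cand_def by blast
  then show ?thesis using step_ne[OF False] assms(2) by (simp add: subset_insertI)
qed

lemma step_card:
  assumes "H \<subseteq> U" "T \<subseteq> H" "greedy_step indep f rk H T \<noteq> T"
  shows "card T < card (greedy_step indep f rk H T)"
proof -
  have "finite (greedy_step indep f rk H T)" using step_sub[OF assms(1,2)] assms(1) finU
    by (meson finite_subset)
  moreover have "T \<subset> greedy_step indep f rk H T" using step_sub[OF assms(1,2)] assms(3) by auto
  ultimately show ?thesis by (simp add: psubset_card_mono)
qed

lemma gs_Suc: "gs indep f rk H (Suc k) = greedy_step indep f rk H (gs indep f rk H k)"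
  unfolding gs_def by simp

lemma gs_sub: "H \<subseteq> U \<Longrightarrow> gs indep f rk H k \<subseteq> H"
proof (induction k)
  case 0 then show ?case by (simp add: gs_def)
next
  case (Suc k) then show ?case using step_sub[OF Suc.prems Suc.IH] by (simp add: gs_Suc)
qed

lemma greedy_gs: "greedy indep f rk H = gs indep f rk H (card H)"
  unfolding greedy_def gs_def by simp

lemma greedy_fix:
  assumes "H \<subseteq> U"
  shows "greedy_step indep f rk H (gs indep f rk H (card H)) = gs indep f rk H (card H)"
  unfolding gs_def
proof (rule iter_fix[where P="\<lambda>T. T \<subseteq> H" and \<mu>=card])
  show "\<And>x. x \<subseteq> H \<Longrightarrow> greedy_step indep f rk H x \<subseteq> H" using step_sub[OF assms] by blast
  show "{} \<subseteq> H" by simp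
  show "\<And>x. x \<subseteq> H \<Longrightarrow> greedy_step indep f rk H x \<noteq> x \<Longrightarrow> card x < card (greedy_step indep f rk H x)"
    using step_card[OF assms] by blast
  show "\<And>x. x \<subseteq> H \<Longrightarrow> card x \<le> card H"
    using assms finU by (meson card_mono finite_subset)
qed

lemma gs_after:
  assumes "greedy_step indep f rk H (gs indep f rk H j) = gs indep f rk H j" "j \<le> k"
  shows "gs indep f rk H k = gs indep f rk H j"
  using funpow_fix_after[of "greedy_step indep f rk H" j "{}" k] assms unfolding gs_def by simp

lemma greedy_eq:
  assumes "H \<subseteq> U" "greedy_step indep f rk H (gs indep f rk H j) = gs indep f rk H j"
  shows "greedy indep f rk H = gs indep f rk H j"
proof -
  have "gs indep f rk H (max j (card H)) = gs indep f rk H j" by (rule gs_after[OF assms(2)]) simp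
  moreover have "gs indep f rk H (max j (card H)) = gs indep f rk H (card H)"
    by (rule gs_after[OF greedy_fix[OF assms(1)]]) simp
  ultimately show ?thesis using greedy_gs by simp
qed

lemma gs_mono: "H \<subseteq> U \<Longrightarrow> gs indep f rk H k \<subseteq> gs indep f rk H (k + d)"
proof (induction d)
  case 0 then show ?case by simp
next
  case (Suc d)
  have "gs indep f rk H (k + d) \<subseteq> gs indep f rk H (k + Suc d)"
    using step_sub[OF Suc.prems gs_sub[OF Suc.prems]] by (simp add: gs_Suc)
  then show ?case using Suc.IH[OF Suc.prems] by blast
qed

lemma gs_sub_greedy:
  assumes "H \<subseteq> U" shows "gs indep f rk H k \<subseteq> greedy indep f rk H"
proof (cases "k \<le> card H")
  case True
  then show ?thesis using gs_mono[OF assms, of k "card H - k"] by (simp add: greedy_gs)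
next
  case False
  then show ?thesis using gs_after[OF greedy_fix[OF assms], of k] by (simp add: greedy_gs)
qed

lemma step_cand_eq:
  assumes "cand indep T H' = cand indep T H"
  shows "greedy_step indep f rk H' T = greedy_step indep f rk H T"
proof (cases "cand indep T H = {}")
  case True then show ?thesis using assms step_empty[of T H] step_empty[of T H'] by simp
next
  case False then show ?thesis using assms step_ne[of T H] step_ne[of T H'] by simp
qed

lemma step_ins:
  assumes HU: "H \<subseteq> U" and e: "e \<in> U - H" and TH: "T \<subseteq> H"
  shows "greedy_step indep f rk (insert e H) T =
    (if e \<in> DD U indep f rk H T then insert e T else greedy_step indep f rk H T)"
proof -
  have eT: "e \<notin> T" using e TH by auto
  have cI1: "cand indep T (insert e H) = insert e (cand indep T H)" if "indep (insert e T)"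
    unfolding cand_def using eT that by auto
  have cI2: "cand indep T (insert e H) = cand indep T H" if "\<not> indep (insert e T)"
    unfolding cand_def using eT that by auto
  have cU: "cand indep T (insert e H) \<subseteq> U" using HU e unfolding cand_def by auto
  show ?thesis
  proof (cases "e \<in> DD U indep f rk H T")
    case True
    then have ind: "indep (insert e T)" and bt: "\<forall>h \<in> cand indep T H. beats f rk T e h"
      unfolding DD_def by auto
    have c': "cand indep T (insert e H) = insert e (cand indep T H)" using cI1[OF ind] .
    have ne: "cand indep T (insert e H) \<noteq> {}" using c' by simp
    have "best f rk T (cand indep T (insert e H)) = e"
    proof (rule best_eq[OF inj cU])
      show "e \<in> cand indep T (insert e H)" using c' by simp
      show "\<forall>e'\<in>cand indep T (insert e H). e' \<noteq> e \<longrightarrow> beats f rk T e e'"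
        using bt unfolding c' by blast
    qed
    then show ?thesis using step_ne[OF ne] True by simp
  next
    case False
    show ?thesis
    proof (cases "indep (insert e T)")
      case False2: False
      have "greedy_step indep f rk (insert e H) T = greedy_step indep f rk H T"
        by (rule step_cand_eq[OF cI2[OF False2]])
      then show ?thesis using False by simp
    next
      case True
      have c': "cand indep T (insert e H) = insert e (cand indep T H)" using cI1[OF True] .
      have "\<not> (\<forall>h \<in> cand indep T H. beats f rk T e h)"
        using False e eT True unfolding DD_def by blast
      then obtain h where h: "h \<in> cand indep T H" "\<not> beats f rk T e h"
        by blast
      then have ne: "cand indep T H \<noteq> {}" by auto
      define b where "b = best f rk T (cand indep T H)"
      have bs: "b \<in> cand indep T H" "\<forall>e'\<in>cand indep T H. e' \<noteq> b \<longrightarrow> beats f rk T b e'"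
        using best_cand[OF HU ne] unfolding b_def by auto
      have hU: "h \<in> U" "h \<noteq> e" using h(1) HU e unfolding cand_def by auto
      have eU: "e \<in> U" using e by simp
      have "beats f rk T e h \<or> beats f rk T h e" using beats_total[OF inj eU hU(1)] hU(2) by blast
      then have he: "beats f rk T h e" using h(2) by blast
      have be: "beats f rk T b e"
      proof (cases "h = b")
        case True then show ?thesis using he by simp
      next
        case False
        then have "beats f rk T b h" using bs(2) h(1) by blast
        then show ?thesis using he by (rule beats_trans)
      qed
      have ne': "cand indep T (insert e H) \<noteq> {}" using c' by simp
      have "best f rk T (cand indep T (insert e H)) = b"
      proof (rule best_eq[OF inj cU])
        show "b \<in> cand indep T (insert e H)" using c' bs(1) by simp
        show "\<forall>e'\<in>cand indep T (insert e H). e' \<noteq> b \<longrightarrow> beats f rk T b e'"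
          unfolding c' using bs(2) be by blast
      qed
      then show ?thesis using step_ne[OF ne'] step_ne[OF ne] False b_def by simp
    qed
  qed
qed

lemma gs_ins_same:
  assumes HU: "H \<subseteq> U" and e: "e \<in> U - H" and nD: "\<forall>k. e \<notin> DD U indep f rk H (gs indep f rk H k)"
  shows "gs indep f rk (insert e H) k = gs indep f rk H k"
proof (induction k)
  case 0 then show ?case by (simp add: gs_def)
next
  case (Suc k)
  then show ?case using step_ins[OF HU e gs_sub[OF HU, of k]] nD by (simp add: gs_Suc)
qed

lemma gs_ins_dich:
  assumes HU: "H \<subseteq> U" and e: "e \<in> U - H"
  shows "gs indep f rk (insert e H) k = gs indep f rk H k \<or> e \<in> gs indep f rk (insert e H) k"
proof (induction k)
  case 0 then show ?case by (simp add: gs_def)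
next
  case (Suc k)
  have H'U: "insert e H \<subseteq> U" using HU e by auto
  from Suc show ?case
  proof
    assume eq: "gs indep f rk (insert e H) k = gs indep f rk H k"
    show ?case using step_ins[OF HU e gs_sub[OF HU, of k]] eq by (simp add: gs_Suc)
  next
    assume "e \<in> gs indep f rk (insert e H) k"
    then show ?case using gs_mono[OF H'U, of k 1] by auto
  qed
qed

lemma greedy_ins_iff:
  assumes HU: "H \<subseteq> U" and e: "e \<in> U - H"
  shows "greedy indep f rk (insert e H) \<noteq> greedy indep f rk H \<longleftrightarrow>
         (\<exists>k. e \<in> DD U indep f rk H (gs indep f rk H k))"
proof
  assume ne: "greedy indep f rk (insert e H) \<noteq> greedy indep f rk H"
  show "\<exists>k. e \<in> DD U indep f rk H (gs indep f rk H k)"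
  proof (rule ccontr)
    assume "\<not> ?thesis"
    then have same: "\<And>k. gs indep f rk (insert e H) k = gs indep f rk H k"
      using gs_ins_same[OF HU e] by blast
    have fH: "finite H" using HU finU finite_subset by blast
    have cH: "card (insert e H) = Suc (card H)" using e fH by simp
    have "greedy indep f rk (insert e H) = gs indep f rk H (Suc (card H))"
      using same cH greedy_gs by metis
    also have "\<dots> = gs indep f rk H (card H)"
      by (rule gs_after[OF greedy_fix[OF HU]]) simp
    finally show False using ne greedy_gs by metis
  qed
next
  assume "\<exists>k. e \<in> DD U indep f rk H (gs indep f rk H k)"
  then obtain k where k: "e \<in> DD U indep f rk H (gs indep f rk H k)" by blast
  have H'U: "insert e H \<subseteq> U" using HU e by auto
  have "e \<in> gs indep f rk (insert e H) (Suc k)"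
    using gs_ins_dich[OF HU e, of k]
  proof
    assume eq: "gs indep f rk (insert e H) k = gs indep f rk H k"
    show ?thesis using step_ins[OF HU e gs_sub[OF HU, of k]] k unfolding gs_Suc eq by simp
  next
    assume "e \<in> gs indep f rk (insert e H) k"
    then show ?thesis using gs_mono[OF H'U, of k 1] by auto
  qed
  then have "e \<in> greedy indep f rk (insert e H)" using gs_sub_greedy[OF H'U] by blast
  moreover have "e \<notin> greedy indep f rk H"
    using gs_sub[OF HU] greedy_gs e by blast
  ultimately show "greedy indep f rk (insert e H) \<noteq> greedy indep f rk H" by blast
qed


definition SInv where
  "SInv H MN \<longleftrightarrow> (\<exists>j. fst MN = gs indep f rk H j \<and> (\<forall>i<j. DD U indep f rk H (gs indep f rk H i) \<subseteq> snd MN)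
      \<and> snd MN \<subseteq> (\<Union>i\<le>j. DD U indep f rk H (gs indep f rk H i)))"

lemma sim_C: "{e \<in> U - (M \<union> N). indep (insert e M)} = cand indep M (U - N)"
  unfolding cand_def by auto

lemma sim_empty: "cand indep M (U - N) = {} \<Longrightarrow> sim_step U indep f rk H (M, N) = (M, N)"
  unfolding sim_step_def Let_def fst_conv snd_conv sim_C by simp

lemma sim_ne: "cand indep M (U - N) \<noteq> {} \<Longrightarrow> sim_step U indep f rk H (M, N) =
   (if best f rk M (cand indep M (U - N)) \<in> H then (insert (best f rk M (cand indep M (U - N))) M, N)
    else (M, insert (best f rk M (cand indep M (U - N))) N))"
  unfolding sim_step_def Let_def fst_conv snd_conv sim_C by simp

lemma SInv_sub:
  assumes HU: "H \<subseteq> U" and I: "SInv H (M, N)"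
  shows "M \<subseteq> H" "N \<subseteq> U - H"
proof -
  obtain j where j: "M = gs indep f rk H j" "N \<subseteq> (\<Union>i\<le>j. DD U indep f rk H (gs indep f rk H i))"
    using I unfolding SInv_def by auto
  show "M \<subseteq> H" using j gs_sub[OF HU] by simp
  show "N \<subseteq> U - H" using j(2) unfolding DD_def by auto
qed

lemma sim_inv_step:
  assumes HU: "H \<subseteq> U" and I: "SInv H (M, N)"
  shows "SInv H (sim_step U indep f rk H (M, N))"
proof (cases "cand indep M (U - N) = {}")
  case True then show ?thesis using I sim_empty by simp
next
  case ne: False
  obtain j where j: "M = gs indep f rk H j" "\<forall>i<j. DD U indep f rk H (gs indep f rk H i) \<subseteq> N"
      "N \<subseteq> (\<Union>i\<le>j. DD U indep f rk H (gs indep f rk H i))"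
    using I unfolding SInv_def by auto
  have MH: "M \<subseteq> H" and NH: "N \<subseteq> U - H" using SInv_sub[OF HU I] by auto
  define C where "C = cand indep M (U - N)"
  define e where "e = best f rk M C"
  have es: "e \<in> C" "\<forall>e'\<in>C. e' \<noteq> e \<longrightarrow> beats f rk M e e'"
    using best_cand[of "U - N" M, OF _ ne] unfolding e_def C_def by auto
  have eC: "e \<in> U" "e \<notin> M" "e \<notin> N" "indep (insert e M)" using es(1) unfolding C_def cand_def by auto
  have candHC: "cand indep M H \<subseteq> C" using NH HU unfolding C_def cand_def by auto
  show ?thesis
  proof (cases "e \<in> H")
    case True
    have res: "sim_step U indep f rk H (M, N) = (insert e M, N)"
      using sim_ne[OF ne] True unfolding e_def C_def by simp
    have eH: "e \<in> cand indep M H" using True eC unfolding cand_def by auto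
    then have neH: "cand indep M H \<noteq> {}" by auto
    have "best f rk M (cand indep M H) = e"
    proof (rule best_eq[OF inj])
      show "cand indep M H \<subseteq> U" using HU unfolding cand_def by auto
      show "e \<in> cand indep M H" by (rule eH)
      show "\<forall>e'\<in>cand indep M H. e' \<noteq> e \<longrightarrow> beats f rk M e e'" using es(2) candHC by blast
    qed
    then have gstep: "gs indep f rk H (Suc j) = insert e M"
      using step_ne[OF neH] j(1) by (simp add: gs_Suc)
    have DM: "DD U indep f rk H M \<subseteq> N"
    proof
      fix d assume d: "d \<in> DD U indep f rk H M"
      show "d \<in> N"
      proof (rule ccontr)
        assume "d \<notin> N"
        then have "d \<in> C" using d unfolding DD_def C_def cand_def by auto
        moreover have "d \<noteq> e" using d True unfolding DD_def by auto
        ultimately have "beats f rk M e d" using es(2) by blast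
        moreover have "beats f rk M d e" using d eH unfolding DD_def by blast
        ultimately show False using beats_asym[of f rk M e d] by blast
      qed
    qed
    have "SInv H (insert e M, N)" unfolding SInv_def fst_conv snd_conv
    proof (intro exI[of _ "Suc j"] conjI)
      show "insert e M = gs indep f rk H (Suc j)" using gstep by simp
      show "\<forall>i<Suc j. DD U indep f rk H (gs indep f rk H i) \<subseteq> N"
        using j(2) DM j(1) less_Suc_eq by auto
      show "N \<subseteq> (\<Union>i\<le>Suc j. DD U indep f rk H (gs indep f rk H i))" using j(3) by fastforce
    qed
    then show ?thesis using res by simp
  next
    case False
    have res: "sim_step U indep f rk H (M, N) = (M, insert e N)"
      using sim_ne[OF ne] False unfolding e_def C_def by simp
    have "\<forall>h\<in>cand indep M H. beats f rk M e h"
    proof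
      fix h assume h: "h \<in> cand indep M H"
      then have "h \<noteq> e" using False unfolding cand_def by auto
      then show "beats f rk M e h" using h candHC es(2) by blast
    qed
    then have "e \<in> DD U indep f rk H M"
      unfolding DD_def using eC False by auto
    then have "SInv H (M, insert e N)" unfolding SInv_def fst_conv snd_conv
      using j by (intro exI[of _ j]) auto
    then show ?thesis using res by simp
  qed
qed

lemma sim_meas:
  assumes HU: "H \<subseteq> U" and I: "SInv H (M, N)" and ch: "sim_step U indep f rk H (M, N) \<noteq> (M, N)"
  shows "card (M \<union> N) < card (fst (sim_step U indep f rk H (M, N)) \<union> snd (sim_step U indep f rk H (M, N)))"
proof -
  have ne: "cand indep M (U - N) \<noteq> {}" using ch sim_empty by auto
  define e where "e = best f rk M (cand indep M (U - N))"
  have "e \<in> cand indep M (U - N)" using best_cand[of "U - N" M, OF _ ne] unfolding e_def by auto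
  then have eC: "e \<notin> M \<union> N" unfolding cand_def by auto
  have r: "sim_step U indep f rk H (M, N) = (if e \<in> H then (insert e M, N) else (M, insert e N))"
    using sim_ne[OF ne] unfolding e_def by simp
  have "fst (sim_step U indep f rk H (M, N)) \<union> snd (sim_step U indep f rk H (M, N)) = insert e (M \<union> N)"
    unfolding r by (cases "e \<in> H") auto
  moreover have "M \<union> N \<subseteq> U" using SInv_sub[OF HU I] HU by auto
  then have "finite (M \<union> N)" using finU by (rule finite_subset)
  ultimately show ?thesis using eC by simp
qed

lemma sim_run_eq:
  assumes HU: "H \<subseteq> U"
  shows "sim_run U indep f rk H = (greedy indep f rk H, (\<Union>k. DD U indep f rk H (gs indep f rk H k)))"
proof -
  let ?s = "sim_step U indep f rk H"
  have I0: "SInv H ({}, {})" unfolding SInv_def by (intro exI[of _ 0]) (auto simp: gs_def)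
  have step': "SInv H y \<Longrightarrow> SInv H (?s y)" for y
    using sim_inv_step[OF HU, of "fst y" "snd y"] by simp
  have fx0: "?s ((?s ^^ card U) ({}, {})) = (?s ^^ card U) ({}, {})"
  proof (rule iter_fix[where P="SInv H" and \<mu>="\<lambda>x. card (fst x \<union> snd x)"])
    show "\<And>x. SInv H x \<Longrightarrow> SInv H (?s x)" using step' by blast
    show "SInv H ({}, {})" by (rule I0)
    show "\<And>x. SInv H x \<Longrightarrow> ?s x \<noteq> x \<Longrightarrow> card (fst x \<union> snd x) < card (fst (?s x) \<union> snd (?s x))"
    proof -
      fix x assume "SInv H x" "?s x \<noteq> x"
      then show "card (fst x \<union> snd x) < card (fst (?s x) \<union> snd (?s x))"
        using sim_meas[OF HU, of "fst x" "snd x"] by simp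
    qed
    show "\<And>x. SInv H x \<Longrightarrow> card (fst x \<union> snd x) \<le> card U"
    proof -
      fix x assume "SInv H x"
      then have "SInv H (fst x, snd x)" by simp
      then have "fst x \<subseteq> H" "snd x \<subseteq> U - H" using SInv_sub[OF HU, of "fst x" "snd x"] by blast+
      then have "fst x \<union> snd x \<subseteq> U" using HU by blast
      then show "card (fst x \<union> snd x) \<le> card U" using finU by (rule card_mono[rotated])
    qed
  qed
  have Ik: "SInv H ((?s ^^ k) ({}, {}))" for k
    by (induction k) (auto simp: I0 step')
  obtain M N where MN: "(?s ^^ card U) ({}, {}) = (M, N)" by (metis prod.collapse)
  have I: "SInv H (M, N)" using Ik[of "card U"] MN by simp
  have fx: "?s (M, N) = (M, N)" using fx0 MN by simp
  have Cempty: "cand indep M (U - N) = {}"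
  proof (rule ccontr)
    assume ne: "cand indep M (U - N) \<noteq> {}"
    define e where "e = best f rk M (cand indep M (U - N))"
    have "e \<in> cand indep M (U - N)" using best_cand[of "U - N" M, OF _ ne] unfolding e_def by auto
    then have eC: "e \<notin> M" "e \<notin> N" unfolding cand_def by auto
    have r: "?s (M, N) = (if e \<in> H then (insert e M, N) else (M, insert e N))"
      using sim_ne[OF ne] unfolding e_def by simp
    show False using fx eC unfolding r by (cases "e \<in> H") auto
  qed
  obtain j where j: "M = gs indep f rk H j" "\<forall>i<j. DD U indep f rk H (gs indep f rk H i) \<subseteq> N"
      "N \<subseteq> (\<Union>i\<le>j. DD U indep f rk H (gs indep f rk H i))"
    using I unfolding SInv_def by auto
  have NH: "N \<subseteq> U - H" using SInv_sub[OF HU I] by auto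
  have "cand indep M H \<subseteq> cand indep M (U - N)" using NH HU unfolding cand_def by blast
  then have "cand indep M H = {}" using Cempty by blast
  then have gfix: "greedy_step indep f rk H (gs indep f rk H j) = gs indep f rk H j" using step_empty j(1) by simp
  have g: "greedy indep f rk H = M" using greedy_eq[OF HU gfix] j(1) by simp
  have DM: "DD U indep f rk H M \<subseteq> N"
  proof
    fix d assume d: "d \<in> DD U indep f rk H M"
    show "d \<in> N"
    proof (rule ccontr)
      assume "d \<notin> N"
      then have "d \<in> cand indep M (U - N)" using d unfolding DD_def cand_def by auto
      then show False using Cempty by simp
    qed
  qed
  have Neq: "N = (\<Union>k. DD U indep f rk H (gs indep f rk H k))"
  proof
    show "N \<subseteq> (\<Union>k. DD U indep f rk H (gs indep f rk H k))" using j(3) by blast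
    show "(\<Union>k. DD U indep f rk H (gs indep f rk H k)) \<subseteq> N"
    proof
      fix d assume "d \<in> (\<Union>k. DD U indep f rk H (gs indep f rk H k))"
      then obtain k where k: "d \<in> DD U indep f rk H (gs indep f rk H k)" by blast
      show "d \<in> N"
      proof (cases "k < j")
        case True then show ?thesis using j(2) k by blast
      next
        case False
        then have "j \<le> k" by simp
        then have "gs indep f rk H k = gs indep f rk H j" by (rule gs_after[OF gfix])
        then have "gs indep f rk H k = M" using j(1) by simp
        then show ?thesis using k DM by blast
      qed
    qed
  qed
  have "sim_run U indep f rk H = (M, N)" unfolding sim_run_def using MN by simp
  then show ?thesis using g Neq by simp
qed

end



lemma count_prefix:
  assumes fU: "finite U" and AU: "A \<subseteq> U"
  shows "card {xs \<in> permutations_of_set U. set (take (card A) xs) = A} = fact (card A) * fact (card U - card A)"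
proof -
  have fA: "finite A" using fU AU finite_subset by blast
  let ?P = "permutations_of_set A \<times> permutations_of_set (U - A)"
  let ?g = "\<lambda>(ys, zs). ys @ zs"
  have eq: "{xs \<in> permutations_of_set U. set (take (card A) xs) = A} = ?g ` ?P"
  proof
    show "{xs \<in> permutations_of_set U. set (take (card A) xs) = A} \<subseteq> ?g ` ?P"
    proof
      fix xs assume xs: "xs \<in> {xs \<in> permutations_of_set U. set (take (card A) xs) = A}"
      then have d: "distinct xs" "set xs = U" "set (take (card A) xs) = A"
        using permutations_of_setD by auto
      have "take (card A) xs \<in> permutations_of_set A" using d by auto
      moreover have "set (drop (card A) xs) = U - A"
      proof -
        have "set xs = set (take (card A) xs) \<union> set (drop (card A) xs)"
          by (metis append_take_drop_id set_append)
        moreover have "set (take (card A) xs) \<inter> set (drop (card A) xs) = {}"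
          using set_take_disj_set_drop_if_distinct[OF d(1)] by simp
        ultimately show ?thesis using d by blast
      qed
      then have "drop (card A) xs \<in> permutations_of_set (U - A)" using d by auto
      ultimately have "(take (card A) xs, drop (card A) xs) \<in> ?P" by simp
      then show "xs \<in> ?g ` ?P" by (rule rev_image_eqI) simp
    qed
  next
    show "?g ` ?P \<subseteq> {xs \<in> permutations_of_set U. set (take (card A) xs) = A}"
    proof
      fix xs assume "xs \<in> ?g ` ?P"
      then obtain ys zs where yz: "ys \<in> permutations_of_set A" "zs \<in> permutations_of_set (U - A)" "xs = ys @ zs"
        by auto
      have y: "set ys = A" "distinct ys" "length ys = card A"
        using yz(1) permutations_of_setD length_finite_permutations_of_set by blast+
      have z: "set zs = U - A" "distinct zs" using yz(2) permutations_of_setD by blast+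
      have "set xs = U" using y z yz(3) AU by auto
      moreover have "distinct xs" using y z yz(3) by auto
      moreover have "take (card A) xs = ys" using yz(3) y(3) by simp
      ultimately show "xs \<in> {xs \<in> permutations_of_set U. set (take (card A) xs) = A}"
        using y by auto
    qed
  qed
  have inj: "inj_on ?g ?P"
  proof (rule inj_onI)
    fix a b assume a: "a \<in> ?P" and b: "b \<in> ?P" and e: "?g a = ?g b"
    obtain a1 a2 where "a = (a1, a2)" by (cases a)
    moreover obtain b1 b2 where "b = (b1, b2)" by (cases b)
    ultimately show "a = b" using a b e length_finite_permutations_of_set append_eq_append_conv
      by (metis SigmaE prod.inject case_prod_conv)
  qed
  have "card (?g ` ?P) = card ?P" using inj by (rule card_image)
  also have "\<dots> = fact (card A) * fact (card (U - A))"
    using fA fU by (simp add: card_cartesian_product)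
  finally show ?thesis using eq card_Diff_subset[OF fA AU] by simp
qed

lemma pmf_left:
  assumes fU: "finite U" and p: "0 \<le> p" "p \<le> 1"
  shows "pmf (map_pmf (\<lambda>b. {e \<in> U. b e}) (Pi_pmf U False (\<lambda>_. bernoulli_pmf p))) A =
    (if A \<subseteq> U then p ^ card A * (1 - p) ^ (card U - card A) else 0)"
proof -
  let ?M = "Pi_pmf U False (\<lambda>_. bernoulli_pmf p)"
  let ?g = "\<lambda>b. {e \<in> U. b e}"
  have pm: "pmf (map_pmf ?g ?M) A = measure ?M (?g -` {A} \<inter> set_pmf ?M)"
    by (simp add: pmf_map measure_Int_set_pmf)
  show ?thesis
  proof (cases "A \<subseteq> U")
    case False
    then have "?g -` {A} = {}" by auto
    then show ?thesis using pm False by simp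
  next
    case True
    let ?c = "\<lambda>x. x \<in> A"
    have "?g -` {A} \<inter> set_pmf ?M = {?c} \<inter> set_pmf ?M"
    proof (intro equalityI subsetI)
      fix b assume b: "b \<in> ?g -` {A} \<inter> set_pmf ?M"
      then have out: "\<forall>x. x \<notin> U \<longrightarrow> b x = False" using set_Pi_pmf_subset[OF fU, of False "\<lambda>_. bernoulli_pmf p"] by auto
      have "b = ?c"
      proof
        fix x show "b x = (x \<in> A)" using b out True by (cases "x \<in> U") auto
      qed
      then show "b \<in> {?c} \<inter> set_pmf ?M" using b by simp
    next
      fix b assume "b \<in> {?c} \<inter> set_pmf ?M"
      then show "b \<in> ?g -` {A} \<inter> set_pmf ?M" using True by auto
    qed
    then have "pmf (map_pmf ?g ?M) A = measure ?M {?c}"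
      using pm by (simp add: measure_Int_set_pmf)
    also have "\<dots> = (\<Prod>x\<in>U. pmf (bernoulli_pmf p) (x \<in> A))"
      unfolding measure_pmf_single by (rule pmf_Pi'[OF fU]) (use True in auto)
    also have "\<dots> = (\<Prod>x\<in>U. if x \<in> A then p else 1 - p)"
      using p by (intro prod.cong) auto
    also have "\<dots> = p ^ card (U \<inter> {x. x \<in> A}) * (1 - p) ^ card (U \<inter> - {x. x \<in> A})"
      using fU by (simp add: prod.If_cases)
    also have "U \<inter> {x. x \<in> A} = A" using True by auto
    also have "U \<inter> - {x. x \<in> A} = U - A" by auto
    also have "card (U - A) = card U - card A"
      using True fU by (meson card_Diff_subset finite_subset)
    finally show ?thesis using True by simp
  qed
qed

lemma pmf_inner:
  assumes xs: "xs \<in> permutations_of_set U" and p: "0 \<le> p" "p \<le> 1"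
  shows "pmf (map_pmf (\<lambda>m. set (take m xs)) (binomial_pmf (card U) p)) A =
    (if set (take (card A) xs) = A then pmf (binomial_pmf (card U) p) (card A) else 0)"
proof -
  let ?B = "binomial_pmf (card U) p"
  have d: "distinct xs" "length xs = card U" using xs permutations_of_setD length_finite_permutations_of_set by blast+
  have sB: "set_pmf ?B \<subseteq> {..card U}" using p by (auto simp: set_pmf_binomial_eq)
  have "(\<lambda>m. set (take m xs)) -` {A} \<inter> set_pmf ?B =
        (if set (take (card A) xs) = A then {card A} else {}) \<inter> set_pmf ?B"
  proof (intro equalityI subsetI)
    fix m assume m: "m \<in> (\<lambda>m. set (take m xs)) -` {A} \<inter> set_pmf ?B"
    then have "m \<le> card U" using sB by auto
    moreover have "card (set (take m xs)) = length (take m xs)" using d by (simp add: distinct_card)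
    ultimately have "card A = m" using m d by auto
    then show "m \<in> (if set (take (card A) xs) = A then {card A} else {}) \<inter> set_pmf ?B" using m by auto
  next
    fix m assume "m \<in> (if set (take (card A) xs) = A then {card A} else {}) \<inter> set_pmf ?B"
    then show "m \<in> (\<lambda>m. set (take m xs)) -` {A} \<inter> set_pmf ?B" by (auto split: if_splits)
  qed
  then have "pmf (map_pmf (\<lambda>m. set (take m xs)) ?B) A = measure ?B (if set (take (card A) xs) = A then {card A} else {})"
    by (metis measure_Int_set_pmf pmf_map)
  then show ?thesis by (simp add: measure_pmf_single)
qed

lemma pmf_right:
  assumes fU: "finite U" and p: "0 \<le> p" "p \<le> 1"
  shows "pmf (bind_pmf (pmf_of_set (permutations_of_set U))
           (\<lambda>xs. map_pmf (\<lambda>m. set (take m xs)) (binomial_pmf (card U) p))) A =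
    (if A \<subseteq> U then p ^ card A * (1 - p) ^ (card U - card A) else 0)"
proof -
  let ?S = "permutations_of_set U"
  let ?B = "binomial_pmf (card U) p"
  let ?k = "card A"
  have Sne: "?S \<noteq> {}" "finite ?S" using fU by auto
  have "pmf (bind_pmf (pmf_of_set ?S) (\<lambda>xs. map_pmf (\<lambda>m. set (take m xs)) ?B)) A =
      (\<Sum>xs\<in>?S. pmf (map_pmf (\<lambda>m. set (take m xs)) ?B) A) / card ?S"
    unfolding pmf_bind by (rule integral_pmf_of_set[OF Sne])
  also have "(\<Sum>xs\<in>?S. pmf (map_pmf (\<lambda>m. set (take m xs)) ?B) A) =
      (\<Sum>xs\<in>?S. if set (take ?k xs) = A then pmf ?B ?k else 0)"
    by (rule sum.cong[OF refl], rule pmf_inner[OF _ p])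
  also have "\<dots> = (\<Sum>xs\<in>{xs\<in>?S. set (take ?k xs) = A}. pmf ?B ?k)"
    by (rule sum.inter_filter[OF Sne(2), symmetric])
  also have "\<dots> = card {xs\<in>?S. set (take ?k xs) = A} * pmf ?B ?k" by simp
  finally have eq: "pmf (bind_pmf (pmf_of_set ?S) (\<lambda>xs. map_pmf (\<lambda>m. set (take m xs)) ?B)) A =
      card {xs\<in>?S. set (take ?k xs) = A} * pmf ?B ?k / card ?S" .
  show ?thesis
  proof (cases "A \<subseteq> U")
    case False
    have "{xs\<in>?S. set (take ?k xs) = A} = {}"
    proof -
      have "set (take ?k xs) \<subseteq> U" if "xs \<in> ?S" for xs
        using that permutations_of_setD(1) set_take_subset by metis
      then show ?thesis using False by blast
    qed
    then show ?thesis using eq False by simp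
  next
    case True
    have kn: "?k \<le> card U" using True fU by (simp add: card_mono)
    have "card {xs\<in>?S. set (take ?k xs) = A} = fact ?k * fact (card U - ?k)"
      by (rule count_prefix[OF fU True])
    then have "pmf (bind_pmf (pmf_of_set ?S) (\<lambda>xs. map_pmf (\<lambda>m. set (take m xs)) ?B)) A =
       (fact ?k * fact (card U - ?k)) * (real (card U choose ?k) * p ^ ?k * (1 - p) ^ (card U - ?k)) / fact (card U)"
      using eq fU pmf_binomial[OF p, of "card U" "card A"] by simp
    also have "\<dots> = p ^ ?k * (1 - p) ^ (card U - ?k)"
      unfolding binomial_fact[OF kn] by (simp add: field_simps)
    finally show ?thesis using True by simp
  qed
qed

lemma dist_eq:
  assumes fU: "finite U" and p: "0 \<le> p" "p \<le> 1"
  shows "map_pmf (\<lambda>b. {e \<in> U. b e}) (Pi_pmf U False (\<lambda>_. bernoulli_pmf p)) =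
    bind_pmf (pmf_of_set (permutations_of_set U))
           (\<lambda>xs. map_pmf (\<lambda>m. set (take m xs)) (binomial_pmf (card U) p))"
  by (rule pmf_eqI) (simp only: pmf_left[OF assms] pmf_right[OF assms])



lemma det:
  assumes "finite U" "inj_on rk U" "H \<subseteq> U"
  shows "sim_run U indep f rk H = (greedy indep f rk H,
     {e \<in> U - H. greedy indep f rk (insert e H) \<noteq> greedy indep f rk H})"
proof -
  have "(\<Union>k. DD U indep f rk H (gs indep f rk H k)) =
        {e \<in> U - H. greedy indep f rk (insert e H) \<noteq> greedy indep f rk H}"
  proof (intro equalityI subsetI)
    fix e assume e: "e \<in> (\<Union>k. DD U indep f rk H (gs indep f rk H k))"
    then have eU: "e \<in> U - H" unfolding DD_def by auto
    then show "e \<in> {e \<in> U - H. greedy indep f rk (insert e H) \<noteq> greedy indep f rk H}"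
      using greedy_ins_iff[OF assms eU] e by auto
  next
    fix e assume e: "e \<in> {e \<in> U - H. greedy indep f rk (insert e H) \<noteq> greedy indep f rk H}"
    then have eU: "e \<in> U - H" by auto
    then show "e \<in> (\<Union>k. DD U indep f rk H (gs indep f rk H k))"
      using greedy_ins_iff[OF assms eU] e by auto
  qed
  then show ?thesis using sim_run_eq[OF assms] by simp
qed

theorem lemma1:
  fixes U :: "'a set" and indep :: "'a set \<Rightarrow> bool" and f :: "'a set \<Rightarrow> real"
    and rk :: "'a \<Rightarrow> nat" and p :: real
  assumes "matroid U indep"
    and "nonneg_on U f" and "monotone_set_fun U f" and "submodular U f"
    and "inj_on rk U"
    and "0 < p" and "p < 1"
  shows "simulate U indep f rk p = online U indep f rk p"
proof -
  have fU: "finite U" using assms(1) unfolding matroid_def by simp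
  have p: "0 \<le> p" "p \<le> 1" using assms(6,7) by auto
  define F where "F = (\<lambda>H. (H, greedy indep f rk H,
     {e \<in> U - H. greedy indep f rk (insert e H) \<noteq> greedy indep f rk H}))"
  let ?Pi = "Pi_pmf U False (\<lambda>_. bernoulli_pmf p)"
  let ?S = "permutations_of_set U"
  let ?B = "binomial_pmf (card U) p"
  have "simulate U indep f rk p = bind_pmf ?Pi (\<lambda>b. return_pmf (F {e \<in> U. b e}))"
    unfolding simulate_def Let_def
  proof (rule bind_pmf_cong[OF refl])
    fix b
    have "{e \<in> U. b e} \<subseteq> U" by auto
    then show "return_pmf ({e \<in> U. b e}, fst (sim_run U indep f rk {e \<in> U. b e}), snd (sim_run U indep f rk {e \<in> U. b e}))
       = return_pmf (F {e \<in> U. b e})"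
      using det[OF fU assms(5)] unfolding F_def by simp
  qed
  also have "\<dots> = map_pmf F (map_pmf (\<lambda>b. {e \<in> U. b e}) ?Pi)"
    by (simp only: map_pmf_comp) (simp add: map_pmf_def)
  also have "\<dots> = map_pmf F (bind_pmf (pmf_of_set ?S) (\<lambda>xs. map_pmf (\<lambda>m. set (take m xs)) ?B))"
    by (simp only: dist_eq[OF fU p])
  also have "\<dots> = bind_pmf (pmf_of_set ?S) (\<lambda>xs. bind_pmf ?B (\<lambda>m. return_pmf (F (set (take m xs)))))"
    by (simp only: map_bind_pmf map_pmf_comp) (simp add: map_pmf_def)
  also have "\<dots> = online U indep f rk p"
    unfolding online_def Let_def
  proof (rule bind_pmf_cong[OF refl])
    fix xs assume "xs \<in> set_pmf (pmf_of_set ?S)"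
    then have xs: "xs \<in> ?S" using fU by simp
    then have d: "distinct xs" "set xs = U" using permutations_of_setD by blast+
    show "bind_pmf ?B (\<lambda>m. return_pmf (F (set (take m xs)))) =
      bind_pmf ?B (\<lambda>m. return_pmf (set (take m xs), greedy indep f rk (set (take m xs)),
          {e \<in> set (drop m xs). greedy indep f rk (insert e (set (take m xs))) \<noteq> greedy indep f rk (set (take m xs))}))"
    proof (rule bind_pmf_cong[OF refl])
      fix m
      have "set (drop m xs) = U - set (take m xs)"
      proof -
        have "set xs = set (take m xs) \<union> set (drop m xs)"
          by (metis append_take_drop_id set_append)
        moreover have "set (take m xs) \<inter> set (drop m xs) = {}"
          using set_take_disj_set_drop_if_distinct[OF d(1)] by simp
        ultimately show ?thesis using d by blast
      qed
      then show "return_pmf (F (set (take m xs))) = return_pmf (set (take m xs), greedy indep f rk (set (take m xs)),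
          {e \<in> set (drop m xs). greedy indep f rk (insert e (set (take m xs))) \<noteq> greedy indep f rk (set (take m xs))})"
        unfolding F_def by simp
    qed
  qed
  finally show ?thesis .
qed


end
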